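(* Let $S=K[x_1,\ldots,x_n]$. If $I$ is an $f$-ideal of $S$ of degree $2$, then $I$ is of $l$ type for some $1\le l\le\lfloor n/2\rfloor$ if and only if the complement graph $\overline{\tau(G(I))}$ is bipartite.
   Context: $K$ is a field; $G(I)$ is the minimal monomial generating set of $I$; "of degree $2$" means all elements of $G(I)$ have degree $2$. With $\sigma$ the bijection $x_{i_1}\cdots x_{i_k}\mapsto\{i_1,\ldots,i_k\}$, the facet complex $\delta_{\mathcal{F}}(I)$ has facets $\sigma(g)$, $g\in G(I)$, the Stanley–Reisner complex is $\delta_{\mathcal{N}}(I)=\{\sigma(g)\mid g \text{ square-free monomial},\ g\notin I\}$, and $I$ is an $f$-ideal if both complexes have the same $f$-vector. For a nonempty proper subset $B\subset[n]$ with complement $\overline B$, $W_B=\{x_ix_j\mid i,j\in B \text{ or } i,j\in\overline B,\ i\neq j\}$. A set $A$ of square-free monomials of degree 2 satisfies $l^{th}$ TPCS if $W_B\subseteq A$ for some $B\subseteq[n]$ with $|B|=l$; an $f$-ideal $I$ is of $l$ type if $G(I)$ satisfies $l^{th}$ TPCS. For $A$ a set of degree-2 square-free monomials, $\tau(A)$ is the graph on vertices $v_1,\ldots,v_n$ with $v_iv_j$ an edge iff $x_ix_j\in A$. *)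

theory Defs
  imports Main
begin

text \<open>Monomials of S = K[x_1,...,x_n] are represented by exponent vectors
  supported on {1..n}. A monomial ideal is represented by the set of monomials
  it contains (it is spanned over K by them, so this determines it).
  The field K plays no role in these combinatorial notions.\<close>

type_synonym monomial = "nat \<Rightarrow> nat"

definition monomials :: "nat \<Rightarrow> monomial set" where
  "monomials n = {m. \<forall>i. m i \<noteq> 0 \<longrightarrow> i \<in> {1..n}}"

definition mdvd :: "monomial \<Rightarrow> monomial \<Rightarrow> bool" where
  "mdvd m m' \<longleftrightarrow> (\<forall>i. m i \<le> m' i)"

definition monomial_ideal :: "nat \<Rightarrow> monomial set \<Rightarrow> bool" where
  "monomial_ideal n I \<longleftrightarrow> I \<subseteq> monomials n \<and>
     (\<forall>m\<in>I. \<forall>m'\<in>monomials n. mdvd m m' \<longrightarrow> m' \<in> I)"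

definition mingens :: "monomial set \<Rightarrow> monomial set" where
  "mingens I = {m\<in>I. \<forall>m'\<in>I. mdvd m' m \<longrightarrow> m' = m}"

definition mdeg :: "nat \<Rightarrow> monomial \<Rightarrow> nat" where
  "mdeg n m = (\<Sum>i=1..n. m i)"

definition squarefree_mon :: "monomial \<Rightarrow> bool" where
  "squarefree_mon m \<longleftrightarrow> (\<forall>i. m i \<le> 1)"

definition sigma :: "monomial \<Rightarrow> nat set" where
  "sigma m = {i. m i \<noteq> 0}"

definition facet_complex :: "monomial set \<Rightarrow> nat set set" where
  "facet_complex I = {F. \<exists>g\<in>mingens I. F \<subseteq> sigma g}"

definition SR_complex :: "nat \<Rightarrow> monomial set \<Rightarrow> nat set set" where
  "SR_complex n I = {sigma g | g. g \<in> monomials n \<and> squarefree_mon g \<and> g \<notin> I}"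

text \<open>f-vector: f_{k-1} is the number of faces of cardinality k.\<close>
definition fvec :: "nat set set \<Rightarrow> nat \<Rightarrow> nat" where
  "fvec \<Delta> k = card {F\<in>\<Delta>. card F = k}"

definition f_ideal :: "nat \<Rightarrow> monomial set \<Rightarrow> bool" where
  "f_ideal n I \<longleftrightarrow> monomial_ideal n I \<and> (\<forall>g\<in>mingens I. squarefree_mon g) \<and>
     fvec (facet_complex I) = fvec (SR_complex n I)"

definition of_degree :: "nat \<Rightarrow> nat \<Rightarrow> monomial set \<Rightarrow> bool" where
  "of_degree n d I \<longleftrightarrow> (\<forall>g\<in>mingens I. mdeg n g = d)"

definition xx :: "nat \<Rightarrow> nat \<Rightarrow> monomial" where
  "xx i j = (\<lambda>k. if k = i \<or> k = j then 1 else 0)"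

definition W :: "nat \<Rightarrow> nat set \<Rightarrow> monomial set" where
  "W n B = {xx i j | i j. i \<noteq> j \<and>
      ((i \<in> B \<and> j \<in> B) \<or> (i \<in> {1..n} - B \<and> j \<in> {1..n} - B))}"

definition TPCS :: "nat \<Rightarrow> nat \<Rightarrow> monomial set \<Rightarrow> bool" where
  "TPCS n l A \<longleftrightarrow> (\<exists>B. B \<subseteq> {1..n} \<and> B \<noteq> {} \<and> B \<noteq> {1..n} \<and> card B = l \<and> W n B \<subseteq> A)"

definition l_type :: "nat \<Rightarrow> nat \<Rightarrow> monomial set \<Rightarrow> bool" where
  "l_type n l I \<longleftrightarrow> f_ideal n I \<and> TPCS n l (mingens I)"

definition tau_edge :: "monomial set \<Rightarrow> nat \<Rightarrow> nat \<Rightarrow> bool" where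
  "tau_edge A i j \<longleftrightarrow> i \<noteq> j \<and> xx i j \<in> A"

definition compl_edge :: "monomial set \<Rightarrow> nat \<Rightarrow> nat \<Rightarrow> bool" where
  "compl_edge A i j \<longleftrightarrow> i \<noteq> j \<and> \<not> tau_edge A i j"

definition bipartite :: "nat set \<Rightarrow> (nat \<Rightarrow> nat \<Rightarrow> bool) \<Rightarrow> bool" where
  "bipartite V E \<longleftrightarrow> (\<exists>X\<subseteq>V. \<forall>u\<in>V. \<forall>v\<in>V. E u v \<longrightarrow> (u \<in> X \<longleftrightarrow> v \<notin> X))"

end

theory Submission
  imports Defs
begin

lemma sigma_sub: "g \<in> monomials n \<Longrightarrow> sigma g \<subseteq> {1..n}"
  by (auto simp: monomials_def sigma_def)

lemma mingens_sub: "mingens I \<subseteq> I" by (auto simp: mingens_def)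

lemma sigma_xx: "sigma (xx i j) = {i, j}"
  by (auto simp: sigma_def xx_def)

lemma no_all_pairs:
  assumes f: "f_ideal n I" and d: "of_degree n 2 I"
    and all: "\<forall>i\<in>{1..n}. \<forall>j\<in>{1..n}. i \<noteq> j \<longrightarrow> xx i j \<in> mingens I"
  shows False
proof -
  have mi: "monomial_ideal n I" and sq: "\<forall>g\<in>mingens I. squarefree_mon g"
    and fv: "fvec (facet_complex I) = fvec (SR_complex n I)"
    using f by (auto simp: f_ideal_def)
  have Imon: "I \<subseteq> monomials n" using mi by (simp add: monomial_ideal_def)
  show False
  proof (cases "n \<ge> 2")
    case True
    have fin: "finite {F \<in> facet_complex I. card F = 2}"
    proof (rule finite_subset[of _ "Pow {1..n}"])
      show "{F \<in> facet_complex I. card F = 2} \<subseteq> Pow {1..n}"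
        using Imon mingens_sub sigma_sub by (fastforce simp: facet_complex_def)
    qed simp
    have "{1,2} \<in> {F \<in> facet_complex I. card F = 2}"
      using all True unfolding facet_complex_def
      by (auto intro!: bexI[of _ "xx 1 2"] simp: sigma_xx)
    hence pos2: "fvec (facet_complex I) 2 > 0" using fin unfolding fvec_def
      by (metis card_gt_0_iff empty_iff)
    have e2: "{F \<in> SR_complex n I. card F = 2} = {}"
    proof (rule ccontr)
      assume "{F \<in> SR_complex n I. card F = 2} \<noteq> {}"
      then obtain g where g: "g \<in> monomials n" "squarefree_mon g" "g \<notin> I"
        "card (sigma g) = 2" by (auto simp: SR_complex_def)
      then obtain i j where ij: "i \<noteq> j" "sigma g = {i,j}" by (meson card_2_iff)
      have "i \<in> {1..n}" "j \<in> {1..n}" using sigma_sub[OF g(1)] ij by auto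
      moreover have "g = xx i j"
      proof
        fix k show "g k = xx i j k"
          using g(2) ij(2) unfolding squarefree_mon_def sigma_def xx_def
          by (metis (mono_tags, lifting) insert_iff le_eq_less_or_eq less_one mem_Collect_eq singletonD)
      qed
      ultimately show False using all ij g(3) mingens_sub by blast
    qed
    have z2: "fvec (SR_complex n I) 2 = 0" unfolding fvec_def by (subst e2) (rule card.empty)
    have "fvec (facet_complex I) 2 = fvec (SR_complex n I) 2" using fv by (rule fun_cong)
    with z2 \<open>fvec (facet_complex I) 2 > 0\<close> show False by linarith
  next
    case False
    have me: "mingens I = {}"
    proof (rule ccontr)
      assume "mingens I \<noteq> {}"
      then obtain g where g: "g \<in> mingens I" by auto
      have dg: "mdeg n g = 2" using d g by (simp add: of_degree_def)
      have g1: "g 1 \<le> 1" using sq g by (simp add: squarefree_mon_def)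
      have "n = 0 \<or> n = 1" using False by linarith
      then show False
      proof
        assume "n = 0" thus False using dg by (simp add: mdeg_def)
      next
        assume "n = 1" thus False using dg g1 by (simp add: mdeg_def)
      qed
    qed
    have fc: "facet_complex I = {}" using me by (simp add: facet_complex_def)
    have f0: "fvec (facet_complex I) 0 = 0" unfolding fc fvec_def by simp
    have z: "(\<lambda>_. 0::nat) \<notin> I"
    proof
      assume "(\<lambda>_. 0::nat) \<in> I"
      hence "(\<lambda>_. 0::nat) \<in> mingens I"
        unfolding mingens_def mdvd_def by (simp add: fun_eq_iff)
      thus False using me by simp
    qed
    have sig0: "sigma (\<lambda>_. 0::nat) = {}" by (simp add: sigma_def)
    have zm: "(\<lambda>_. 0::nat) \<in> monomials n" "squarefree_mon (\<lambda>_. 0::nat)"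
      by (auto simp: monomials_def squarefree_mon_def)
    have inSR: "{} \<in> SR_complex n I"
      unfolding SR_complex_def using z zm sig0 by (metis (mono_tags, lifting) mem_Collect_eq)
    have finS: "finite {F \<in> SR_complex n I. card F = 0}"
    proof (rule finite_subset[of _ "Pow {1..n}"])
      show "{F \<in> SR_complex n I. card F = 0} \<subseteq> Pow {1..n}"
        unfolding SR_complex_def using sigma_sub by blast
    qed simp
    have "{} \<in> {F \<in> SR_complex n I. card F = 0}" using inSR by simp
    hence "fvec (SR_complex n I) 0 > 0" unfolding fvec_def using finS
      by (metis card_gt_0_iff empty_iff)
    moreover have "fvec (facet_complex I) 0 = fvec (SR_complex n I) 0" using fv by (rule fun_cong)
    ultimately show False using f0 by linarith
  qed
qed

lemma W_compl: "B \<subseteq> {1..n} \<Longrightarrow> W n ({1..n} - B) = W n B"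
  unfolding W_def by (auto simp: Diff_Diff_Int Int_absorb1)

theorem proposition4p4:
  fixes n :: nat and I :: "monomial set"
  assumes "f_ideal n I" and "of_degree n 2 I"
  shows "(\<exists>l. 1 \<le> l \<and> l \<le> n div 2 \<and> l_type n l I) \<longleftrightarrow>
         bipartite {1..n} (compl_edge (mingens I))"
proof
  assume "\<exists>l. 1 \<le> l \<and> l \<le> n div 2 \<and> l_type n l I"
  then obtain B where B: "B \<subseteq> {1..n}" "W n B \<subseteq> mingens I"
    by (auto simp: l_type_def TPCS_def)
  show "bipartite {1..n} (compl_edge (mingens I))"
    unfolding bipartite_def
  proof (intro exI[of _ B] conjI ballI impI)
    fix u v assume uv: "u \<in> {1..n}" "v \<in> {1..n}" "compl_edge (mingens I) u v"
    hence "u \<noteq> v" "xx u v \<notin> W n B"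
      using B(2) by (auto simp: compl_edge_def tau_edge_def)
    thus "(u \<in> B) = (v \<notin> B)" using uv(1,2) unfolding W_def by blast
  qed (use B in auto)
next
  assume "bipartite {1..n} (compl_edge (mingens I))"
  then obtain X where X: "X \<subseteq> {1..n}"
    "\<forall>u\<in>{1..n}. \<forall>v\<in>{1..n}. compl_edge (mingens I) u v \<longrightarrow> (u \<in> X \<longleftrightarrow> v \<notin> X)"
    by (auto simp: bipartite_def)
  have WX: "W n X \<subseteq> mingens I"
  proof
    fix m assume "m \<in> W n X"
    then obtain i j where ij: "m = xx i j" "i \<noteq> j"
      "(i \<in> X \<and> j \<in> X) \<or> (i \<in> {1..n} - X \<and> j \<in> {1..n} - X)"
      by (auto simp: W_def)
    hence "i \<in> {1..n}" "j \<in> {1..n}" using X(1) by auto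
    thus "m \<in> mingens I" using X(2) ij unfolding compl_edge_def tau_edge_def
      by blast
  qed
  show "\<exists>l. 1 \<le> l \<and> l \<le> n div 2 \<and> l_type n l I"
  proof (cases "X = {} \<or> X = {1..n}")
    case True
    have "\<forall>i\<in>{1..n}. \<forall>j\<in>{1..n}. i \<noteq> j \<longrightarrow> xx i j \<in> mingens I"
      using WX True unfolding W_def by blast
    with no_all_pairs[OF assms] show ?thesis by blast
  next
    case False
    define Y where "Y = {1..n} - X"
    have cY: "card Y = n - card X" using X(1) unfolding Y_def
      by (simp add: card_Diff_subset finite_subset)
    have cX1: "card X \<le> n" using card_mono[OF _ X(1)] by simp
    have cX2: "card X > 0" using X(1) False by (auto simp: finite_subset card_gt_0_iff)
    note cX = cX1 cX2
    have Ysub: "Y \<subseteq> {1..n}" "Y \<noteq> {}" "Y \<noteq> {1..n}" using X(1) False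
      unfolding Y_def by auto
    have WY: "W n Y \<subseteq> mingens I" using WX W_compl[OF X(1)] Y_def by simp
    have cY0: "card Y > 0" using Ysub by (simp add: card_gt_0_iff finite_subset)
    show ?thesis
    proof (cases "card X \<le> n div 2")
      case True
      thus ?thesis using assms(1) X(1) False WX cX
        by (auto simp: l_type_def TPCS_def intro!: exI[of _ "card X"] exI[of _ X])
    next
      case c: False
      hence "card Y \<le> n div 2" using cY cX by linarith
      thus ?thesis using assms(1) Ysub WY cY0
        by (auto simp: l_type_def TPCS_def intro!: exI[of _ "card Y"] exI[of _ Y])
    qed
  qed
qed

end
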